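(* Let $T>0$, $\rho>0$, and let $a,b:[0,\infty)\to[0,\infty)$ and $\mathfrak n$ satisfy: $a,b\in\mathcal C^0([0,\infty))\cap\mathcal C^1(0,\infty)$; $a',b'$ bounded on $(1,\infty)$; $a(x)>0$ for $x>0$ and $1/a\in L^1(0,1)$; $\Phi:=b/a$ has a limit $\Phi_0$ at $0^+$ with $\Phi_0<\rho$ and $\Phi'\in L^1(0,1)$; $\mathfrak n$ is nonnegative and continuous on $[\Phi_0,\infty)$. Let $u^{\rm in}\in(\Phi_0,\rho]$ and $\delta>0$ with $2\delta<u^{\rm in}-\Phi_0$, and let $\mathcal B_\delta([0,T))$ be the set of continuous $u:[0,T)\to[0,\rho]$ with $u(0)=u^{\rm in}$ and $\Phi_0+\delta\le u(t)\le\rho$ for all $t\in[0,T)$. For $u\in\mathcal B_\delta([0,T))$ and $x>0$, let $s\mapsto X(s;0,x)$ denote the solution on $[0,T)$ of $\partial_sX(s;0,x)=a(X(s;0,x))u(s)-b(X(s;0,x))$, $X(0;0,x)=x$. Let $\{u^n\}\subset\mathcal B_\delta([0,T))$ converge uniformly to $u$, with corresponding characteristics $X^n$. Then for each $x>0$, $X^n(\cdot;0,x)$ converges uniformly to $X(\cdot;0,x)$ on $[0,T)$ as $n\to\infty$.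
   Context: For such $u$ the characteristic $X(\cdot;0,x)$ exists, is unique and stays in $(0,\infty)$ on the whole interval $[0,T)$. *)

theory Defs
  imports "HOL-Analysis.Analysis"
begin

definition Bdelta :: "real \<Rightarrow> real \<Rightarrow> real \<Rightarrow> real \<Rightarrow> real \<Rightarrow> (real \<Rightarrow> real) set" where
  "Bdelta T \<rho> uin \<Phi>0 \<delta> = {u. continuous_on {0..<T} u \<and> u 0 = uin \<and>
      (\<forall>t\<in>{0..<T}. 0 \<le> u t \<and> \<Phi>0 + \<delta> \<le> u t \<and> u t \<le> \<rho>)}"

definition is_characteristic ::
  "(real \<Rightarrow> real) \<Rightarrow> (real \<Rightarrow> real) \<Rightarrow> real \<Rightarrow> (real \<Rightarrow> real) \<Rightarrow> real \<Rightarrow> (real \<Rightarrow> real) \<Rightarrow> bool" where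
  "is_characteristic a b T u x X \<longleftrightarrow> X 0 = x \<and>
     (\<forall>s\<in>{0..<T}. 0 < X s \<and>
        (X has_real_derivative (a (X s) * u s - b (X s))) (at s within {0..<T}))"

end

theory Submission
  imports Defs
begin


lemma deriv_nonpos_mono:
  fixes g g' :: "real \<Rightarrow> real"
  assumes d: "\<forall>s\<in>{0..<T}. (g has_real_derivative g' s) (at s within {0..<T})"
    and n: "\<forall>s\<in>{0..<T}. g' s \<le> 0" and t: "t \<in> {0..<T}"
  shows "g t \<le> g 0"
proof (cases "t = 0")
  case True then show ?thesis by simp
next
  case False
  with t have t0: "0 < t" "t < T" by auto
  have cont: "continuous_on {0..t} g"
  proof -
    have "continuous_on {0..<T} g"
      using d by (metis DERIV_continuous continuous_on_eq_continuous_within)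
    then show ?thesis by (rule continuous_on_subset) (use t0 in auto)
  qed
  have dat: "(g has_real_derivative g' s) (at s)" if "0 < s" "s < T" for s
  proof -
    have "(g has_real_derivative g' s) (at s within {0<..<T})"
      using d that by (meson DERIV_subset atLeastLessThan_iff greaterThanLessThan_iff
          less_eq_real_def subsetI)
    moreover have "at s within {0<..<T} = at s" by (rule at_within_open) (use that in auto)
    ultimately show ?thesis by simp
  qed
  obtain l z where z: "0 < z" "z < t" "DERIV g z :> l" "g t - g 0 = (t - 0) * l"
    using MVT[OF t0(1) cont] dat t0 by (meson less_trans real_differentiable_def)
  have "l = g' z" using z dat[of z] t0 by (meson DERIV_unique less_trans)
  then have "l \<le> 0" using n z t0 by auto
  then show ?thesis using z t0 by (smt (verit) mult_nonneg_nonpos)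
qed

lemma gronwall_lin:
  fixes Y Y' :: "real \<Rightarrow> real"
  assumes d: "\<forall>s\<in>{0..<T}. (Y has_real_derivative Y' s) (at s within {0..<T})"
    and ineq: "\<forall>s\<in>{0..<T}. Y' s \<le> K * (Y s + c)" and t: "t \<in> {0..<T}"
  shows "Y t + c \<le> (Y 0 + c) * exp (K * t)"
proof -
  let ?g = "\<lambda>s. (Y s + c) * exp (- K * s)"
  have "\<forall>s\<in>{0..<T}. (?g has_real_derivative
      (Y' s * exp (- K * s) + (Y s + c) * (exp (- K * s) * (- K)))) (at s within {0..<T})"
    using d by (auto intro!: derivative_eq_intros)
  moreover have "\<forall>s\<in>{0..<T}. Y' s * exp (- K * s) + (Y s + c) * (exp (- K * s) * (- K)) \<le> 0"
  proof
    fix s assume "s \<in> {0..<T}"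
    then have "Y' s - K * (Y s + c) \<le> 0" using ineq by auto
    then have "(Y' s - K * (Y s + c)) * exp (- K * s) \<le> 0"
      by (simp add: mult_nonpos_nonneg)
    then show "Y' s * exp (- K * s) + (Y s + c) * (exp (- K * s) * (- K)) \<le> 0"
      by (simp add: algebra_simps)
  qed
  ultimately have "?g t \<le> ?g 0" by (rule deriv_nonpos_mono[OF _ _ t])
  then have "(Y t + c) * exp (- K * t) * exp (K * t) \<le> (Y 0 + c) * exp (K * t)"
    by (simp add: mult_right_mono)
  then show ?thesis by (simp add: mult.assoc flip: exp_add)
qed

lemma lower_bound:
  fixes Y Y' :: "real \<Rightarrow> real"
  assumes d: "\<forall>s\<in>{0..<T}. (Y has_real_derivative Y' s) (at s within {0..<T})"
    and pos: "\<forall>s\<in>{0..<T}. 0 < Y s \<and> Y s < m \<longrightarrow> Y' s > 0"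
    and Y0: "m \<le> Y 0" and ypos: "\<forall>s\<in>{0..<T}. 0 < Y s" and t: "t \<in> {0..<T}"
  shows "m \<le> Y t"
proof -
  have cont: "continuous_on {0..t} Y"
  proof -
    have "continuous_on {0..<T} Y"
      using d by (metis DERIV_continuous continuous_on_eq_continuous_within)
    then show ?thesis by (rule continuous_on_subset) (use t in auto)
  qed
  obtain s where s: "s \<in> {0..t}" "\<forall>y\<in>{0..t}. Y s \<le> Y y"
    using continuous_attains_inf[OF compact_Icc _ cont] t by auto
  show ?thesis
  proof (rule ccontr)
    assume "\<not> m \<le> Y t"
    moreover have "Y s \<le> Y t" using s t by auto
    ultimately have lt: "Y s < m" by linarith
    then have "s \<noteq> 0" using Y0 by auto
    then have s0: "0 < s" using s by auto
    have sT: "s \<in> {0..<T}" using s t by auto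
    then have "Y' s > 0" using pos lt ypos by auto
    then obtain e where e: "e > 0" "\<forall>h>0. s - h \<in> {0..<T} \<longrightarrow> h < e \<longrightarrow> Y (s - h) < Y s"
      using has_real_derivative_pos_inc_left d sT by blast
    define h where "h = min (e/2) (s/2)"
    have "h > 0" "h < e" using e s0 by (auto simp: h_def)
    moreover have "s - h \<in> {0..<T}" "s - h \<in> {0..t}" using s0 sT s e by (auto simp: h_def)
    ultimately have "Y (s - h) < Y s" using e(2) by blast
    moreover have "Y s \<le> Y (s - h)" using s(2) \<open>s - h \<in> {0..t}\<close> by blast
    ultimately show False by linarith
  qed
qed

lemma lip_from_deriv:
  fixes f :: "real \<Rightarrow> real"
  assumes m: "0 < m" and df: "\<forall>y>0. f differentiable at y"
    and dc: "continuous_on {0<..} (deriv f)"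
  shows "\<exists>L\<ge>0. \<forall>y\<in>{m..M}. \<forall>z\<in>{m..M}. \<bar>f y - f z\<bar> \<le> L * \<bar>y - z\<bar>"
proof -
  have "continuous_on {m..M} (deriv f)" using dc by (rule continuous_on_subset) (use m in auto)
  then have "bounded (deriv f ` {m..M})" by (simp add: compact_continuous_image compact_imp_bounded)
  then obtain B where B: "\<forall>y\<in>{m..M}. \<bar>deriv f y\<bar> \<le> B" by (auto simp: bounded_iff)
  have D: "\<forall>y. m \<le> y \<longrightarrow> DERIV f y :> deriv f y"
    using df m DERIV_deriv_iff_real_differentiable by auto
  have key: "\<bar>f y - f z\<bar> \<le> max B 0 * \<bar>y - z\<bar>" if "y \<in> {m..M}" "z \<in> {m..M}" "z < y" for y z
  proof -
    have "\<exists>w>z. w < y \<and> f y - f z = (y - z) * deriv f w"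
      by (rule MVT2[OF \<open>z < y\<close>]) (use D that in auto)
    then obtain w where w: "z < w" "w < y" "f y - f z = (y - z) * deriv f w" by blast
    have "\<bar>deriv f w\<bar> \<le> B" using B w that by auto
    moreover have "\<bar>f y - f z\<bar> = \<bar>y - z\<bar> * \<bar>deriv f w\<bar>" using w by (simp add: abs_mult)
    moreover have "\<bar>y - z\<bar> * \<bar>deriv f w\<bar> \<le> \<bar>y - z\<bar> * max B 0"
      by (rule mult_left_mono) (use \<open>\<bar>deriv f w\<bar> \<le> B\<close> in auto)
    ultimately show ?thesis by (simp add: mult.commute)
  qed
  show ?thesis
  proof (intro exI[of _ "max B 0"] conjI ballI)
    fix y z assume "y \<in> {m..M}" "z \<in> {m..M}"
    then show "\<bar>f y - f z\<bar> \<le> max B 0 * \<bar>y - z\<bar>"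
      using key[of y z] key[of z y] by (cases "z < y"; cases "y < z") (auto simp: abs_minus_commute)
  qed simp
qed





theorem mainTheorem6:
  fixes T \<rho> \<Phi>0 uin \<delta> x :: real
    and a b nn :: "real \<Rightarrow> real"
    and un :: "nat \<Rightarrow> real \<Rightarrow> real" and u :: "real \<Rightarrow> real"
    and Xn :: "nat \<Rightarrow> real \<Rightarrow> real" and X :: "real \<Rightarrow> real"
  assumes T_pos: "T > 0" and rho_pos: "\<rho> > 0"
    and a_nonneg: "\<forall>y\<ge>0. a y \<ge> 0" and b_nonneg: "\<forall>y\<ge>0. b y \<ge> 0"
    and a_cont: "continuous_on {0..} a" and b_cont: "continuous_on {0..} b"
    and a_diff: "\<forall>y>0. a differentiable at y" and b_diff: "\<forall>y>0. b differentiable at y"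
    and a'_cont: "continuous_on {0<..} (deriv a)" and b'_cont: "continuous_on {0<..} (deriv b)"
    and a'_bdd: "\<exists>M. \<forall>y>1. \<bar>deriv a y\<bar> \<le> M"
    and b'_bdd: "\<exists>M. \<forall>y>1. \<bar>deriv b y\<bar> \<le> M"
    and a_pos: "\<forall>y>0. a y > 0"
    and inv_a_L1: "(\<lambda>y. 1 / a y) absolutely_integrable_on {0<..<1}"
    and Phi_lim: "((\<lambda>y. b y / a y) \<longlongrightarrow> \<Phi>0) (at_right 0)"
    and Phi0_lt: "\<Phi>0 < \<rho>"
    and Phi'_L1: "deriv (\<lambda>y. b y / a y) absolutely_integrable_on {0<..<1}"
    and nn_nonneg: "\<forall>y\<ge>\<Phi>0. nn y \<ge> 0" and nn_cont: "continuous_on {\<Phi>0..} nn"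
    and uin: "\<Phi>0 < uin" "uin \<le> \<rho>"
    and delta: "\<delta> > 0" "2 * \<delta> < uin - \<Phi>0"
    and un_B: "\<forall>k. un k \<in> Bdelta T \<rho> uin \<Phi>0 \<delta>"
    and un_conv: "uniform_limit {0..<T} un u sequentially"
    and x_pos: "x > 0"
    and Xn_char: "\<forall>k. is_characteristic a b T (un k) x (Xn k)"
    and X_char: "is_characteristic a b T u x X"
  shows "uniform_limit {0..<T} Xn X sequentially"
  proof -
  have unB: "\<Phi>0 + \<delta> \<le> un k t \<and> un k t \<le> \<rho>" if "t \<in> {0..<T}" for k t
    using un_B that by (auto simp: Bdelta_def)
  have uB: "\<Phi>0 + \<delta> \<le> u t \<and> u t \<le> \<rho>" if t: "t \<in> {0..<T}" for t
  proof -
    have lim: "(\<lambda>k. un k t) \<longlonglongrightarrow> u t" using tendsto_uniform_limitI[OF un_conv t] .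
    have "\<Phi>0 + \<delta> \<le> u t" by (rule LIMSEQ_le_const[OF lim]) (use unB[OF t] in auto)
    moreover have "u t \<le> \<rho>" by (rule LIMSEQ_le_const2[OF lim]) (use unB[OF t] in auto)
    ultimately show ?thesis by simp
  qed
  have "\<forall>\<^sub>F y in at_right 0. b y / a y < \<Phi>0 + \<delta>"
    using order_tendstoD(2)[OF Phi_lim] delta by simp
  then obtain \<eta> where eta: "\<eta> > 0" "\<forall>y>0. y < \<eta> \<longrightarrow> b y / a y < \<Phi>0 + \<delta>"
    by (auto simp: eventually_at_right_field)
  define m where "m = min x \<eta>"
  have m_pos: "m > 0" using eta x_pos by (simp add: m_def)
  have rhs_pos: "a y * v - b y > 0" if "0 < y" "y < m" "\<Phi>0 + \<delta> \<le> v" for y v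
  proof -
    have ay: "a y > 0" using a_pos that by auto
    have "b y / a y < \<Phi>0 + \<delta>" using eta that by (auto simp: m_def)
    then have "b y < (\<Phi>0 + \<delta>) * a y" using ay by (simp add: pos_divide_less_eq)
    also have "\<dots> \<le> v * a y" using that ay by (simp add: mult_right_mono)
    finally show ?thesis by (simp add: mult.commute)
  qed
  obtain Ma where Ma: "\<forall>y>1. \<bar>deriv a y\<bar> \<le> Ma" using a'_bdd by blast
  have ac01: "continuous_on {0..1} a" using a_cont by (rule continuous_on_subset) auto
  have "\<exists>y0\<in>{0..1}. \<forall>y\<in>{0..1}. a y \<le> a y0"
    by (rule continuous_attains_sup[OF compact_Icc _ ac01]) simp
  then obtain y0 where y0: "y0 \<in> {0..1}" "\<forall>y\<in>{0..1}. a y \<le> a y0" by blast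
  define A0 where "A0 = a y0"
  have A0_nn: "A0 \<ge> 0" using a_nonneg y0 by (auto simp: A0_def)
  have agrow: "a y \<le> A0 + \<bar>Ma\<bar> * y" if "y \<ge> 0" for y
  proof (cases "y \<le> 1")
    case True
    then have "a y \<le> A0" using y0 that by (auto simp: A0_def)
    moreover have "0 \<le> \<bar>Ma\<bar> * y" using that by simp
    ultimately show ?thesis by linarith
  next
    case False
    then have y1: "1 < y" by simp
    have D: "\<forall>z. 1 \<le> z \<longrightarrow> DERIV a z :> deriv a z"
      using a_diff DERIV_deriv_iff_real_differentiable by auto
    have "\<exists>z>1. z < y \<and> a y - a 1 = (y - 1) * deriv a z"
      by (rule MVT2[OF y1]) (use D in auto)
    then obtain z where z: "1 < z" "z < y" "a y - a 1 = (y - 1) * deriv a z" by blast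
    have "deriv a z \<le> \<bar>Ma\<bar>" using Ma z by force
    then have "(y - 1) * deriv a z \<le> (y - 1) * \<bar>Ma\<bar>" using y1 by (simp add: mult_left_mono)
    also have "\<dots> \<le> y * \<bar>Ma\<bar>" by (simp add: mult_right_mono)
    finally have "a y - a 1 \<le> y * \<bar>Ma\<bar>" using z by simp
    moreover have "a 1 \<le> A0" using y0 by (auto simp: A0_def)
    ultimately show ?thesis by (simp add: mult.commute)
  qed
  define K1 where "K1 = \<rho> * \<bar>Ma\<bar> + 1"
  have K1_pos: "K1 > 0" using rho_pos by (simp add: K1_def add_nonneg_pos)
  define c1 where "c1 = \<rho> * A0 / K1"
  have c1_nn: "c1 \<ge> 0" using rho_pos A0_nn K1_pos by (simp add: c1_def)
  define Mb where "Mb = (x + c1) * exp (K1 * T)"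
  have bounds: "m \<le> Y t \<and> Y t \<le> Mb"
    if vB: "\<forall>s\<in>{0..<T}. \<Phi>0 + \<delta> \<le> v s \<and> v s \<le> \<rho>" and Yc: "is_characteristic a b T v x Y"
      and t: "t \<in> {0..<T}" for v Y t
  proof -
    have Y0: "Y 0 = x" and Ypos: "\<forall>s\<in>{0..<T}. 0 < Y s"
      and Yd: "\<forall>s\<in>{0..<T}. (Y has_real_derivative (a (Y s) * v s - b (Y s))) (at s within {0..<T})"
      using Yc by (auto simp: is_characteristic_def)
    have "m \<le> Y t"
    proof (rule lower_bound[OF Yd _ _ Ypos t])
      show "\<forall>s\<in>{0..<T}. 0 < Y s \<and> Y s < m \<longrightarrow> 0 < a (Y s) * v s - b (Y s)"
        using rhs_pos vB by auto
      show "m \<le> Y 0" using Y0 by (simp add: m_def)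
    qed
    moreover have "Y t \<le> Mb"
    proof -
      have "\<forall>s\<in>{0..<T}. a (Y s) * v s - b (Y s) \<le> K1 * (Y s + c1)"
      proof
        fix s assume s: "s \<in> {0..<T}"
        have ys: "Y s > 0" using Ypos s by auto
        have "a (Y s) * v s - b (Y s) \<le> a (Y s) * v s" using b_nonneg ys by auto
        also have "\<dots> \<le> a (Y s) * \<rho>" using vB s a_nonneg ys by (auto intro: mult_left_mono)
        also have "\<dots> \<le> (A0 + \<bar>Ma\<bar> * Y s) * \<rho>" using agrow ys rho_pos by (auto intro: mult_right_mono)
        also have "\<dots> = \<rho> * A0 + (\<rho> * \<bar>Ma\<bar>) * Y s" by (simp add: algebra_simps)
        also have "\<dots> \<le> \<rho> * A0 + K1 * Y s" using ys by (simp add: K1_def algebra_simps)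
        also have "\<dots> = K1 * (Y s + c1)" using K1_pos by (simp add: c1_def algebra_simps)
        finally show "a (Y s) * v s - b (Y s) \<le> K1 * (Y s + c1)" .
      qed
      from gronwall_lin[OF Yd this t] have "Y t + c1 \<le> (x + c1) * exp (K1 * t)" using Y0 by simp
      also have "\<dots> \<le> (x + c1) * exp (K1 * T)"
        using t K1_pos x_pos c1_nn by (auto intro!: mult_left_mono)
      finally show ?thesis using c1_nn by (simp add: Mb_def)
    qed
    ultimately show ?thesis by simp
  qed
  obtain La where La: "La \<ge> 0" "\<forall>y\<in>{m..Mb}. \<forall>z\<in>{m..Mb}. \<bar>a y - a z\<bar> \<le> La * \<bar>y - z\<bar>"
    using lip_from_deriv[OF m_pos a_diff a'_cont] by blast
  obtain Lb where Lb: "Lb \<ge> 0" "\<forall>y\<in>{m..Mb}. \<forall>z\<in>{m..Mb}. \<bar>b y - b z\<bar> \<le> Lb * \<bar>y - z\<bar>"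
    using lip_from_deriv[OF m_pos b_diff b'_cont] by blast
  define Amax where "Amax = A0 + \<bar>Ma\<bar> * Mb"
  define L where "L = La * \<rho> + Lb"
  define K where "K = 2 * L + Amax + 1"
  have L_nn: "L \<ge> 0" using La Lb rho_pos by (simp add: L_def)
  have m_le_x: "m \<le> x" by (simp add: m_def)
  have Amax_nn: "Amax \<ge> 0" and K_pos: "K > 0"
  proof -
    have "Mb \<ge> 0" using c1_nn x_pos by (simp add: Mb_def)
    then show "Amax \<ge> 0" using A0_nn by (simp add: Amax_def)
    then show "K > 0" using L_nn by (simp add: K_def)
  qed
  have est: "(Xn k t - X t)^2 \<le> (Amax * \<epsilon> / K) * exp (K * T)"
    if eps: "0 < \<epsilon>" "\<epsilon> \<le> 1" and close: "\<forall>s\<in>{0..<T}. \<bar>un k s - u s\<bar> \<le> \<epsilon>"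
      and t: "t \<in> {0..<T}" for k \<epsilon> t
  proof -
    have cu: "\<forall>s\<in>{0..<T}. \<Phi>0 + \<delta> \<le> un k s \<and> un k s \<le> \<rho>" using unB by blast
    have cuu: "\<forall>s\<in>{0..<T}. \<Phi>0 + \<delta> \<le> u s \<and> u s \<le> \<rho>" using uB by blast
    have Xnc: "is_characteristic a b T (un k) x (Xn k)" using Xn_char by blast
    have bXn: "m \<le> Xn k s \<and> Xn k s \<le> Mb" if "s \<in> {0..<T}" for s
      using bounds[OF cu Xnc that] .
    have bX: "m \<le> X s \<and> X s \<le> Mb" if "s \<in> {0..<T}" for s
      using bounds[OF cuu X_char that] .
    have Xn0: "Xn k 0 = x"
      and Xnd: "\<forall>s\<in>{0..<T}. (Xn k has_real_derivative (a (Xn k s) * un k s - b (Xn k s))) (at s within {0..<T})"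
      using Xnc by (auto simp: is_characteristic_def)
    have X0: "X 0 = x"
      and Xd: "\<forall>s\<in>{0..<T}. (X has_real_derivative (a (X s) * u s - b (X s))) (at s within {0..<T})"
      using X_char by (auto simp: is_characteristic_def)
    define d where "d s = Xn k s - X s" for s
    define D where "D s = (a (Xn k s) * un k s - b (Xn k s)) - (a (X s) * u s - b (X s))" for s
    have dd: "(d has_real_derivative D s) (at s within {0..<T})" if "s \<in> {0..<T}" for s
      unfolding d_def D_def using DERIV_diff[OF Xnd[rule_format, OF that] Xd[rule_format, OF that]] .
    have Yd: "\<forall>s\<in>{0..<T}. ((\<lambda>s. d s * d s) has_real_derivative (D s * d s + D s * d s)) (at s within {0..<T})"
      using DERIV_mult[OF dd dd] by blast
    define c where "c = Amax * \<epsilon> / K"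
    have c_nn: "c \<ge> 0" using Amax_nn K_pos eps by (simp add: c_def)
    have Dbound: "\<bar>D s\<bar> \<le> L * \<bar>d s\<bar> + Amax * \<epsilon>" if s: "s \<in> {0..<T}" for s
    proof -
      have eq: "D s = (a (Xn k s) - a (X s)) * un k s + a (X s) * (un k s - u s) - (b (Xn k s) - b (X s))"
        by (simp add: D_def algebra_simps)
      have m1: "Xn k s \<in> {m..Mb}" "X s \<in> {m..Mb}" using bXn[OF s] bX[OF s] by auto
      have unn: "0 \<le> un k s" "un k s \<le> \<rho>" using un_B[rule_format, of k] s unfolding Bdelta_def by blast+
      have t1: "\<bar>(a (Xn k s) - a (X s)) * un k s\<bar> \<le> La * \<bar>d s\<bar> * \<rho>"
      proof -
        have "\<bar>(a (Xn k s) - a (X s)) * un k s\<bar> = \<bar>a (Xn k s) - a (X s)\<bar> * un k s"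
          using unn by (simp add: abs_mult)
        also have "\<dots> \<le> La * \<bar>d s\<bar> * un k s"
          using La(2) m1 unn by (auto simp: d_def intro!: mult_right_mono)
        also have "\<dots> \<le> La * \<bar>d s\<bar> * \<rho>" using La(1) unn by (auto intro!: mult_left_mono)
        finally show ?thesis .
      qed
      have aX: "0 \<le> a (X s)" "a (X s) \<le> Amax"
      proof -
        show "0 \<le> a (X s)" using a_nonneg m1 m_pos by auto
        have "a (X s) \<le> A0 + \<bar>Ma\<bar> * X s" using agrow m1 m_pos by auto
        also have "\<dots> \<le> Amax" using m1 by (auto simp: Amax_def intro!: mult_left_mono)
        finally show "a (X s) \<le> Amax" .
      qed
      have t2: "\<bar>a (X s) * (un k s - u s)\<bar> \<le> Amax * \<epsilon>"
      proof -
        have "\<bar>a (X s) * (un k s - u s)\<bar> = a (X s) * \<bar>un k s - u s\<bar>" using aX by (simp add: abs_mult)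
        also have "\<dots> \<le> Amax * \<epsilon>" using aX close s by (auto intro!: mult_mono)
        finally show ?thesis .
      qed
      have t3: "\<bar>b (Xn k s) - b (X s)\<bar> \<le> Lb * \<bar>d s\<bar>" using Lb(2) m1 by (auto simp: d_def)
      have "\<bar>D s\<bar> \<le> La * \<bar>d s\<bar> * \<rho> + Amax * \<epsilon> + Lb * \<bar>d s\<bar>"
        unfolding eq using t1 t2 t3 by linarith
      then show ?thesis by (simp add: L_def algebra_simps)
    qed
    have ineq: "\<forall>s\<in>{0..<T}. D s * d s + D s * d s \<le> K * (d s * d s + c)"
    proof
      fix s assume s: "s \<in> {0..<T}"
      define z where "z = \<bar>d s\<bar>"
      define w where "w = \<bar>D s\<bar>"
      have z_nn: "z \<ge> 0" by (simp add: z_def)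
      have zz: "d s * d s = z * z" by (simp add: z_def)
      have "D s * d s + D s * d s \<le> 2 * (w * z)"
        by (simp add: w_def z_def abs_mult[symmetric])
      also have "\<dots> \<le> 2 * ((L * z + Amax * \<epsilon>) * z)"
        using Dbound[OF s] z_nn by (auto simp: w_def z_def intro!: mult_right_mono)
      also have "\<dots> = 2 * L * (z * z) + Amax * \<epsilon> * (2 * z)" by (simp add: algebra_simps)
      also have "\<dots> \<le> 2 * L * (z * z) + Amax * \<epsilon> * (z * z + 1)"
      proof -
        have "2 * z \<le> z * z + 1" using sum_squares_ge_zero[of "z - 1" 0]
          by (simp add: algebra_simps power2_eq_square)
        then show ?thesis using Amax_nn eps by (auto intro!: mult_left_mono)
      qed
      also have "\<dots> = 2 * L * (z * z) + (Amax * \<epsilon>) * (z * z) + Amax * \<epsilon>" by (simp add: algebra_simps)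
      also have "\<dots> \<le> 2 * L * (z * z) + Amax * (z * z) + Amax * \<epsilon>"
        using Amax_nn eps by (auto intro!: mult_right_mono mult_left_le)
      also have "\<dots> \<le> K * (z * z) + Amax * \<epsilon>" by (simp add: K_def algebra_simps)
      also have "\<dots> = K * (d s * d s + c)" using K_pos by (simp add: zz c_def algebra_simps)
      finally show "D s * d s + D s * d s \<le> K * (d s * d s + c)" .
    qed
    have "d t * d t + c \<le> (d 0 * d 0 + c) * exp (K * t)"
      using gronwall_lin[OF Yd ineq t] by simp
    also have "\<dots> = c * exp (K * t)" using Xn0 X0 by (simp add: d_def)
    also have "\<dots> \<le> c * exp (K * T)" using c_nn K_pos t by (auto intro!: mult_left_mono)
    finally have "d t * d t \<le> c * exp (K * T)" using c_nn by linarith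
    then show ?thesis by (simp add: d_def c_def power2_eq_square)
  qed
  show ?thesis
    unfolding uniform_limit_sequentially_iff
  proof (intro allI impI)
    fix e :: real assume e: "e > 0"
    define \<epsilon> where "\<epsilon> = min 1 (e^2 * K / (2 * (Amax + 1) * exp (K * T)))"
    have eps_pos: "\<epsilon> > 0" using e K_pos Amax_nn by (simp add: \<epsilon>_def)
    have eps1: "\<epsilon> \<le> 1" by (simp add: \<epsilon>_def)
    obtain N where N: "\<forall>n\<ge>N. \<forall>s\<in>{0..<T}. dist (un n s) (u s) < \<epsilon>"
      using un_conv[unfolded uniform_limit_sequentially_iff] eps_pos by blast
    show "\<exists>N. \<forall>n\<ge>N. \<forall>t\<in>{0..<T}. dist (Xn n t) (X t) < e"
    proof (intro exI allI impI ballI)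
      fix n t assume n: "N \<le> n" and t: "t \<in> {0..<T}"
      have close: "\<forall>s\<in>{0..<T}. \<bar>un n s - u s\<bar> \<le> \<epsilon>"
        using N n by (auto simp: dist_real_def less_imp_le)
      have "(Xn n t - X t)^2 \<le> (Amax * \<epsilon> / K) * exp (K * T)"
        by (rule est[OF eps_pos eps1 close t])
      also have "\<dots> < e^2"
      proof -
        have E: "exp (K * T) > 0" by simp
        have "\<epsilon> \<le> e^2 * K / (2 * (Amax + 1) * exp (K * T))" by (simp add: \<epsilon>_def)
        then have "\<epsilon> * (2 * (Amax + 1) * exp (K * T)) \<le> e^2 * K"
          using Amax_nn E by (simp add: pos_le_divide_eq)
        moreover have "Amax * \<epsilon> * exp (K * T) < \<epsilon> * (2 * (Amax + 1) * exp (K * T))"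
        proof -
          have "0 < \<epsilon> * exp (K * T)" using eps_pos E by simp
          then have "Amax * (\<epsilon> * exp (K * T)) < (2 * (Amax + 1)) * (\<epsilon> * exp (K * T))"
            using Amax_nn by (intro mult_strict_right_mono) auto
          then show ?thesis by (simp add: algebra_simps)
        qed
        ultimately have "Amax * \<epsilon> * exp (K * T) < e^2 * K" by linarith
        then show ?thesis using K_pos by (simp add: pos_divide_less_eq)
      qed
      finally have "\<bar>Xn n t - X t\<bar>^2 < e^2" by simp
      then have "\<bar>Xn n t - X t\<bar> < e" by (rule power_less_imp_less_base) (use e in simp)
      then show "dist (Xn n t) (X t) < e" by (simp add: dist_real_def)
    qed
  qed
qed


end
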